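(* Let $\mu$ be a valuated matroid on $[n]$ and let $A\in K^{n\times n}$ be a weakly monomial matrix. Then $\mathrm{val}(A)\odot\overline{\operatorname{trop}}(\mu)\subseteq\mathbb{P}(\mathbb{T}^n)$ is a tropical linear space.
   Context: $K$ is a field with non-Archimedean valuation $\mathrm{val}:K\to\mathbb{T}=\mathbb{R}\cup\{\infty\}$; $\mathbb{P}(\mathbb{T}^n)=(\mathbb{T}^n\setminus\{(\infty,\dots,\infty)\})/\mathbb{R}\mathbf{1}$; $(\mathrm{val}(A)\odot v)_i=\min_j(\mathrm{val}(A_{ij})+v_j)$, applied pointwise to sets. A matrix is weakly monomial if each row has at most one nonzero entry. Valuated matroid of rank $r$ on $[n]$: $\nu:\binom{[n]}{r}\to\mathbb{T}$, not identically $\infty$, such that for all $I,J$, $i\in I\setminus J$ there is $j\in J\setminus I$ with $\nu(I)+\nu(J)\ge\nu((I\setminus i)\cup j)+\nu((J\setminus j)\cup i)$. A tropical linear space is a set of the form $\overline{\operatorname{trop}}(\nu)$: the set of $x\in\mathbb{P}(\mathbb{T}^n)$ such that for each $I\in\binom{[n]}{r+1}$ with $C_\nu(I)\neq(\infty,\dots)$, where $C_\nu(I)_i=\nu(I\setminus i)$ for $i\in I$ and $\infty$ else, $\min_i(C_\nu(I)_i+x_i)$ is attained at least twice ($\infty$ counts as twice). *)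

theory Defs
  imports "HOL-Library.Extended_Real"
begin

text \<open>Tropical numbers T = R \<union> {\<infinity>} are modelled inside ereal (values never -\<infinity>).
  The ground set [n] is a finite type 'n. A subset of P(T^n) is modelled by its
  preimage in T^n minus the all-\<infinity> vector (a set closed under adding real constants).\<close>

definition nonarch_valuation :: "('k::field \<Rightarrow> ereal) \<Rightarrow> bool" where
  "nonarch_valuation v \<longleftrightarrow>
     (\<forall>x. v x \<noteq> -\<infinity>) \<and> (\<forall>x. v x = \<infinity> \<longleftrightarrow> x = 0) \<and>
     (\<forall>x y. v (x * y) = v x + v y) \<and>
     (\<forall>x y. min (v x) (v y) \<le> v (x + y))"

definition valuated_matroid :: "nat \<Rightarrow> ('n::finite set \<Rightarrow> ereal) \<Rightarrow> bool" where
  "valuated_matroid r \<nu> \<longleftrightarrow>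
     (\<forall>I. \<nu> I \<noteq> -\<infinity>) \<and>
     (\<exists>I. card I = r \<and> \<nu> I \<noteq> \<infinity>) \<and>
     (\<forall>I J. card I = r \<longrightarrow> card J = r \<longrightarrow>
        (\<forall>i\<in>I - J. \<exists>j\<in>J - I.
           \<nu> I + \<nu> J \<ge> \<nu> ((I - {i}) \<union> {j}) + \<nu> ((J - {j}) \<union> {i})))"

definition proj_points :: "('n::finite \<Rightarrow> ereal) set" where
  "proj_points = {x. (\<forall>i. x i \<noteq> -\<infinity>) \<and> (\<exists>i. x i \<noteq> \<infinity>)}"

definition min_twice :: "('n::finite \<Rightarrow> ereal) \<Rightarrow> bool" where
  "min_twice f \<longleftrightarrow> Min (range f) = \<infinity> \<or>
     (\<exists>i j. i \<noteq> j \<and> f i = Min (range f) \<and> f j = Min (range f))"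

definition circuit_vec :: "('n::finite set \<Rightarrow> ereal) \<Rightarrow> 'n set \<Rightarrow> 'n \<Rightarrow> ereal" where
  "circuit_vec \<nu> I = (\<lambda>i. if i \<in> I then \<nu> (I - {i}) else \<infinity>)"

definition trop_lin :: "nat \<Rightarrow> ('n::finite set \<Rightarrow> ereal) \<Rightarrow> ('n \<Rightarrow> ereal) set" where
  "trop_lin r \<nu> = {x \<in> proj_points.
     \<forall>I. card I = r + 1 \<longrightarrow> (\<exists>i. circuit_vec \<nu> I i \<noteq> \<infinity>) \<longrightarrow>
        min_twice (\<lambda>i. circuit_vec \<nu> I i + x i)}"

definition tropical_linear_space :: "('n::finite \<Rightarrow> ereal) set \<Rightarrow> bool" where
  "tropical_linear_space S \<longleftrightarrow> (\<exists>r \<nu>. valuated_matroid r \<nu> \<and> S = trop_lin r \<nu>)"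

definition trop_mat_vec :: "('n::finite \<Rightarrow> 'n \<Rightarrow> ereal) \<Rightarrow> ('n \<Rightarrow> ereal) \<Rightarrow> ('n \<Rightarrow> ereal)" where
  "trop_mat_vec M v = (\<lambda>i. Min (range (\<lambda>j. M i j + v j)))"

definition trop_mat_image :: "('n::finite \<Rightarrow> 'n \<Rightarrow> ereal) \<Rightarrow> ('n \<Rightarrow> ereal) set \<Rightarrow> ('n \<Rightarrow> ereal) set" where
  "trop_mat_image M S = (trop_mat_vec M ` S) \<inter> proj_points"

definition weakly_monomial :: "('n::finite \<Rightarrow> 'n \<Rightarrow> 'k::zero) \<Rightarrow> bool" where
  "weakly_monomial A \<longleftrightarrow> (\<forall>i. card {j. A i j \<noteq> 0} \<le> 1)"

end

theory Submission
  imports Defs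
begin

lemma mt_iff:
  fixes f :: "'n::finite \<Rightarrow> ereal"
  shows "min_twice f \<longleftrightarrow> (\<forall>i. f i \<noteq> \<infinity> \<longrightarrow> (\<exists>j. j \<noteq> i \<and> f j \<le> f i))"
proof -
  define m where "m = Min (range f)"
  have mle: "\<And>i. m \<le> f i" unfolding m_def by simp
  have mmem: "m \<in> range f" unfolding m_def by (rule Min_in) auto
  show ?thesis
  proof
    assume "min_twice f"
    then have "m = \<infinity> \<or> (\<exists>i j. i \<noteq> j \<and> f i = m \<and> f j = m)" unfolding min_twice_def m_def .
    then show "\<forall>i. f i \<noteq> \<infinity> \<longrightarrow> (\<exists>j. j \<noteq> i \<and> f j \<le> f i)"
    proof
      assume "m = \<infinity>" then show ?thesis using mle by (metis ereal_infty_less_eq(1))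
    next
      assume "\<exists>i j. i \<noteq> j \<and> f i = m \<and> f j = m"
      then obtain i j where "i \<noteq> j" "f i = m" "f j = m" by blast
      then show ?thesis using mle by metis
    qed
  next
    assume H: "\<forall>i. f i \<noteq> \<infinity> \<longrightarrow> (\<exists>j. j \<noteq> i \<and> f j \<le> f i)"
    show "min_twice f"
    proof (cases "m = \<infinity>")
      case False
      obtain i0 where i0: "f i0 = m" using mmem by auto
      then obtain j where "j \<noteq> i0" "f j \<le> f i0" using H False by metis
      then have "f j = m" using mle[of j] i0 by simp
      then show ?thesis using \<open>j \<noteq> i0\<close> i0 unfolding min_twice_def m_def[symmetric] by blast
    qed (simp add: min_twice_def m_def[symmetric])
  qed
qed

definition circ_ok :: "nat \<Rightarrow> ('n::finite set \<Rightarrow> ereal) \<Rightarrow> ('n \<Rightarrow> ereal) \<Rightarrow> bool" where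
  "circ_ok r \<nu> x \<longleftrightarrow> (\<forall>I. card I = r + 1 \<longrightarrow> (\<forall>i. circuit_vec \<nu> I i + x i \<noteq> \<infinity> \<longrightarrow>
      (\<exists>j. j \<noteq> i \<and> circuit_vec \<nu> I j + x j \<le> circuit_vec \<nu> I i + x i)))"

lemma trop_lin_iff: "x \<in> trop_lin r \<nu> \<longleftrightarrow> x \<in> proj_points \<and> circ_ok r \<nu> x"
proof -
  have "min_twice (\<lambda>i. circuit_vec \<nu> I i + x i)" if "\<forall>i. circuit_vec \<nu> I i = \<infinity>" for I
    unfolding mt_iff using that by simp
  then show ?thesis unfolding trop_lin_def circ_ok_def mt_iff[symmetric] by auto
qed

definition cocirc :: "('n::finite set \<Rightarrow> ereal) \<Rightarrow> 'n set \<Rightarrow> 'n \<Rightarrow> ereal" where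
  "cocirc \<nu> K = (\<lambda>j. if j \<in> K then \<infinity> else \<nu> (insert j K))"

lemma plucker:
  assumes vm: "valuated_matroid r \<nu>" and cK: "card K + 1 = r"
  shows "circ_ok r \<nu> (cocirc \<nu> K)"
  unfolding circ_ok_def
proof (intro allI impI)
  fix I i
  assume cI: "card I = r + 1" and ne: "circuit_vec \<nu> I i + cocirc \<nu> K i \<noteq> \<infinity>"
  have iI: "i \<in> I" using ne unfolding circuit_vec_def by (cases "i \<in> I") auto
  have iK: "i \<notin> K" using ne unfolding cocirc_def by (cases "i \<in> K") auto
  define A where "A = insert i K"
  define B where "B = I - {i}"
  have cA: "card A = r" unfolding A_def using iK cK by simp
  have cB: "card B = r" unfolding B_def using iI cI by simp
  have "i \<in> A - B" unfolding A_def B_def by simp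
  then obtain j where j: "j \<in> B - A"
    and ex: "\<nu> A + \<nu> B \<ge> \<nu> ((A - {i}) \<union> {j}) + \<nu> ((B - {j}) \<union> {i})"
    using vm cA cB unfolding valuated_matroid_def by blast
  have e1: "(A - {i}) \<union> {j} = insert j K" unfolding A_def using iK by auto
  have e2: "(B - {j}) \<union> {i} = I - {j}" using iI j by (auto simp: A_def B_def)
  have jI: "j \<in> I" "j \<noteq> i" "j \<notin> K" using j by (auto simp: A_def B_def)
  have "circuit_vec \<nu> I j + cocirc \<nu> K j = \<nu> (insert j K) + \<nu> (I - {j})"
    using jI unfolding circuit_vec_def cocirc_def by (simp add: add.commute)
  also have "\<dots> \<le> \<nu> A + \<nu> B" using ex e1 e2 by simp
  also have "\<dots> = circuit_vec \<nu> I i + cocirc \<nu> K i"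
    using iI iK unfolding circuit_vec_def cocirc_def A_def B_def by (simp add: add.commute)
  finally show "\<exists>j. j \<noteq> i \<and> circuit_vec \<nu> I j + cocirc \<nu> K j \<le> circuit_vec \<nu> I i + cocirc \<nu> K i"
    using jI by blast
qed

lemma circ_ok_shift:
  assumes "circ_ok r \<nu> h"
  shows "circ_ok r \<nu> (\<lambda>j. ereal a + h j)"
  unfolding circ_ok_def
proof (intro allI impI)
  fix I i
  assume cI: "card I = r + 1" and ne: "circuit_vec \<nu> I i + (ereal a + h i) \<noteq> \<infinity>"
  have eq: "\<And>j. circuit_vec \<nu> I j + (ereal a + h j) = ereal a + (circuit_vec \<nu> I j + h j)"
    by (simp add: ac_simps)
  have "circuit_vec \<nu> I i + h i \<noteq> \<infinity>" using ne eq[of i] by auto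
  then obtain j where "j \<noteq> i" "circuit_vec \<nu> I j + h j \<le> circuit_vec \<nu> I i + h i"
    using assms cI unfolding circ_ok_def by blast
  then show "\<exists>j. j \<noteq> i \<and> circuit_vec \<nu> I j + (ereal a + h j) \<le> circuit_vec \<nu> I i + (ereal a + h i)"
    unfolding eq by (metis add_left_mono)
qed

lemma circ_ok_Min:
  fixes h :: "'e \<Rightarrow> 'n::finite \<Rightarrow> ereal"
  assumes E: "finite E" "E \<noteq> {}" and hE: "\<And>e. e \<in> E \<Longrightarrow> circ_ok r \<nu> (h e)"
  shows "circ_ok r \<nu> (\<lambda>j. Min ((\<lambda>e. h e j) ` E))"
  unfolding circ_ok_def
proof (intro allI impI)
  fix I i
  assume cI: "card I = r + 1" and ne: "circuit_vec \<nu> I i + Min ((\<lambda>e. h e i) ` E) \<noteq> \<infinity>"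
  have "Min ((\<lambda>e. h e i) ` E) \<in> (\<lambda>e. h e i) ` E" by (rule Min_in) (use E in auto)
  then obtain e where e: "e \<in> E" "Min ((\<lambda>e. h e i) ` E) = h e i" by auto
  then obtain j where j: "j \<noteq> i" "circuit_vec \<nu> I j + h e j \<le> circuit_vec \<nu> I i + h e i"
    using hE[of e] cI ne unfolding circ_ok_def by auto
  have "Min ((\<lambda>e. h e j) ` E) \<le> h e j" using E e by simp
  then have "circuit_vec \<nu> I j + Min ((\<lambda>e. h e j) ` E) \<le> circuit_vec \<nu> I j + h e j"
    by (rule add_left_mono)
  then show "\<exists>j. j \<noteq> i \<and> circuit_vec \<nu> I j + Min ((\<lambda>e. h e j) ` E) \<le> circuit_vec \<nu> I i + Min ((\<lambda>e. h e i) ` E)"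
    using j e by (metis order_trans)
qed

lemma spanning:
  fixes \<nu> :: "'n::finite set \<Rightarrow> ereal"
  assumes fin: "\<exists>B. card B = k \<and> \<nu> B \<noteq> \<infinity>" and ninf: "\<And>I. \<nu> I \<noteq> -\<infinity>"
    and y: "y \<in> trop_lin k \<nu>" and ye: "y e \<noteq> \<infinity>"
  shows "\<exists>B. card B = k \<and> e \<in> B \<and> \<nu> B \<noteq> \<infinity> \<and>
           (\<forall>f. f \<notin> B \<longrightarrow> \<nu> B + y f \<le> \<nu> (insert f (B - {e})) + y e)"
proof -
  have yp: "y \<in> proj_points" and circ: "circ_ok k \<nu> y" using y trop_lin_iff by auto
  have yninf: "\<And>f. y f \<noteq> -\<infinity>" using yp unfolding proj_points_def by auto
  define Z where "Z = {f. y f \<noteq> \<infinity>}"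
  define Bs where "Bs = {B. card B = k \<and> \<nu> B \<noteq> \<infinity>}"
  have Bsf: "finite Bs" by simp
  have Bsne: "Bs \<noteq> {}" using fin unfolding Bs_def by auto
  define \<rho> where "\<rho> = Max ((\<lambda>B. card (B - Z)) ` Bs)"
  have \<rho>ge: "\<And>B. B \<in> Bs \<Longrightarrow> card (B - Z) \<le> \<rho>" unfolding \<rho>_def using Bsf by simp
  define Bs' where "Bs' = {B \<in> Bs. card (B - Z) = \<rho>}"
  have "\<rho> \<in> (\<lambda>B. card (B - Z)) ` Bs" unfolding \<rho>_def using Bsf Bsne by (intro Max_in) auto
  then have Bs'ne: "Bs' \<noteq> {}" unfolding Bs'_def by auto
  have Bs'f: "finite Bs'" by simp
  define yr where "yr f = real_of_ereal (y f)" for f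
  define \<nu>r where "\<nu>r B = real_of_ereal (\<nu> B)" for B
  have yZ: "y f = ereal (yr f)" if "f \<in> Z" for f
    using yninf[of f] that unfolding yr_def Z_def by (cases "y f") auto
  have \<nu>Bs: "\<nu> B = ereal (\<nu>r B)" if "\<nu> B \<noteq> \<infinity>" for B
    using ninf[of B] that unfolding \<nu>r_def by (cases "\<nu> B") auto
  define w where "w B = \<nu>r B - (\<Sum>b\<in>B \<inter> Z. yr b)" for B
  have "Min (w ` Bs') \<in> w ` Bs'" using Bs'ne Bs'f by (intro Min_in) auto
  then obtain B1 where B1: "B1 \<in> Bs'" "w B1 = Min (w ` Bs')" by auto
  have B1min: "\<forall>B\<in>Bs'. w B1 \<le> w B" using B1 Bs'f by simp
  have "\<exists>B2. B2 \<in> Bs' \<and> e \<in> B2 \<and> (\<forall>B\<in>Bs'. w B2 \<le> w B)"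
  proof (cases "e \<in> B1")
    case True then show ?thesis using B1 B1min by blast
  next
    case False
    define I where "I = insert e B1"
    have cB1: "card B1 = k" "\<nu> B1 \<noteq> \<infinity>" "card (B1 - Z) = \<rho>" using B1 unfolding Bs'_def Bs_def by auto
    have cI: "card I = k + 1" unfolding I_def using False cB1 by simp
    have Ie: "I - {e} = B1" unfolding I_def using False by auto
    have eZ: "e \<in> Z" using ye unfolding Z_def by simp
    have "circuit_vec \<nu> I e + y e = \<nu> B1 + y e" unfolding circuit_vec_def I_def using Ie I_def by simp
    also have "\<dots> \<noteq> \<infinity>" using \<nu>Bs[OF cB1(2)] yZ[OF eZ] by simp
    finally have ne: "circuit_vec \<nu> I e + y e \<noteq> \<infinity>" .
    then obtain j where j: "j \<noteq> e" "circuit_vec \<nu> I j + y j \<le> circuit_vec \<nu> I e + y e"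
      using circ cI unfolding circ_ok_def by blast
    have jne: "circuit_vec \<nu> I j + y j \<noteq> \<infinity>" using j(2) ne by (auto simp: top_unique)
    have jI: "j \<in> I" using jne unfolding circuit_vec_def by (cases "j \<in> I") auto
    have jB1: "j \<in> B1" using jI j(1) unfolding I_def by auto
    have nuj: "\<nu> (I - {j}) \<noteq> \<infinity>" using jne jI unfolding circuit_vec_def by auto
    have yj: "y j \<noteq> \<infinity>" using jne by auto
    have jZ: "j \<in> Z" using yj unfolding Z_def by simp
    define B' where "B' = I - {j}"
    have cB': "card B' = k" unfolding B'_def using cI jI by simp
    have B'Z: "B' - Z = B1 - Z" unfolding B'_def I_def using eZ jZ by auto
    have B'Bs': "B' \<in> Bs'" unfolding Bs'_def Bs_def using cB' nuj B'Z cB1 B'_def by simp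
    have ineq: "\<nu> B' + y j \<le> \<nu> B1 + y e" using j(2) jI I_def Ie unfolding circuit_vec_def B'_def by simp
    then have ineqr: "\<nu>r B' + yr j \<le> \<nu>r B1 + yr e"
      using \<nu>Bs[OF nuj[folded B'_def]] \<nu>Bs[OF cB1(2)] yZ[OF jZ] yZ[OF eZ] by simp
    have B'ZI: "B' \<inter> Z = insert e ((B1 \<inter> Z) - {j})" unfolding B'_def I_def using eZ j(1) by auto
    have sumeq: "(\<Sum>b\<in>B' \<inter> Z. yr b) = (\<Sum>b\<in>B1 \<inter> Z. yr b) - yr j + yr e"
      unfolding B'ZI using False jB1 jZ by (simp add: sum_diff1)
    have "w B' \<le> w B1" unfolding w_def sumeq using ineqr by simp
    then have "\<forall>B\<in>Bs'. w B' \<le> w B" using B1min by force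
    moreover have "e \<in> B'" unfolding B'_def I_def using j(1) by simp
    ultimately show ?thesis using B'Bs' by blast
  qed
  then obtain B2 where B2: "B2 \<in> Bs'" "e \<in> B2" "\<forall>B\<in>Bs'. w B2 \<le> w B" by blast
  have cB2: "card B2 = k" "\<nu> B2 \<noteq> \<infinity>" "card (B2 - Z) = \<rho>" using B2 unfolding Bs'_def Bs_def by auto
  have eZ: "e \<in> Z" using ye unfolding Z_def by simp
  have "\<forall>f. f \<notin> B2 \<longrightarrow> \<nu> B2 + y f \<le> \<nu> (insert f (B2 - {e})) + y e"
  proof (intro allI impI)
    fix f assume fB2: "f \<notin> B2"
    define B3 where "B3 = insert f (B2 - {e})"
    show "\<nu> B2 + y f \<le> \<nu> B3 + y e"
    proof (cases "\<nu> B3 = \<infinity>")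
      case True then show ?thesis by simp
    next
      case False
      have kpos: "k \<ge> 1" using cB2(1) B2(2) card_gt_0_iff[of B2] by auto
      have cB3: "card B3 = k" unfolding B3_def using fB2 B2(2) cB2 kpos by (simp add: card_Diff_singleton)
      have B3Bs: "B3 \<in> Bs" unfolding Bs_def using cB3 False by simp
      have fZ: "f \<in> Z"
      proof (rule ccontr)
        assume "f \<notin> Z"
        then have "B3 - Z = insert f (B2 - Z)" unfolding B3_def using eZ by auto
        then have "card (B3 - Z) = \<rho> + 1" using cB2 fB2 by simp
        then show False using \<rho>ge[OF B3Bs] by simp
      qed
      have "B3 - Z = B2 - Z" unfolding B3_def using eZ fZ by auto
      then have "B3 \<in> Bs'" unfolding Bs'_def using B3Bs cB2 by simp
      then have wle: "w B2 \<le> w B3" using B2 by blast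
      have B3ZI: "B3 \<inter> Z = insert f ((B2 \<inter> Z) - {e})" unfolding B3_def using fZ by auto
      have sumeq: "(\<Sum>b\<in>B3 \<inter> Z. yr b) = (\<Sum>b\<in>B2 \<inter> Z. yr b) - yr e + yr f"
        unfolding B3ZI using fB2 B2(2) eZ by (simp add: sum_diff1)
      have "\<nu>r B2 + yr f \<le> \<nu>r B3 + yr e" using wle unfolding w_def sumeq by simp
      then show ?thesis using \<nu>Bs[OF False] \<nu>Bs[OF cB2(2)] yZ[OF fZ] yZ[OF eZ] by simp
    qed
  qed
  then show ?thesis using cB2 B2 by blast
qed

locale wms =
  fixes \<nu> :: "'n::finite set \<Rightarrow> ereal" and r k :: nat and R S T B0 :: "'n set"
    and \<sigma> :: "'n \<Rightarrow> 'n" and c :: "'n \<Rightarrow> real" and M :: "'n \<Rightarrow> 'n \<Rightarrow> ereal"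
  assumes vm: "valuated_matroid r \<nu>"
    and M_R: "\<And>i j. i \<in> R \<Longrightarrow> M i j = (if j = \<sigma> i then ereal (c i) else \<infinity>)"
    and M_nR: "\<And>i j. i \<notin> R \<Longrightarrow> M i j = \<infinity>"
    and S_def: "S = \<sigma> ` R"
    and B0: "card B0 = r" "\<nu> B0 \<noteq> \<infinity>" "card (B0 \<inter> S) = k"
    and T_def: "T = B0 - S"
    and kmax: "\<And>B. card B = r \<Longrightarrow> \<nu> B \<noteq> \<infinity> \<Longrightarrow> card (B \<inter> S) \<le> k"
begin

definition nu' :: "'n set \<Rightarrow> ereal" where
  "nu' I = (if I \<subseteq> R \<and> inj_on \<sigma> I \<and> card I = k then ereal (\<Sum>i\<in>I. c i) + \<nu> (\<sigma> ` I \<union> T) else \<infinity>)"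

lemma ninf: "\<nu> I \<noteq> -\<infinity>" using vm unfolding valuated_matroid_def by auto

lemma TS: "T \<inter> S = {}" unfolding T_def by auto

lemma k_le: "k \<le> r" using B0 by (metis card_mono finite inf_le1)

lemma cardT: "card T = r - k"
proof -
  have "B0 = (B0 \<inter> S) \<union> T" "(B0 \<inter> S) \<inter> T = {}" unfolding T_def by auto
  then have "card B0 = card (B0 \<inter> S) + card T" by (metis card_Un_disjoint finite)
  then show ?thesis using B0 by simp
qed

lemma sigS: "i \<in> R \<Longrightarrow> \<sigma> i \<in> S" unfolding S_def by simp

lemma sigT: "i \<in> R \<Longrightarrow> \<sigma> i \<notin> T" using sigS TS by blast

lemma card_img:
  assumes "I \<subseteq> R" "inj_on \<sigma> I"
  shows "card (\<sigma> ` I \<union> T) = card I + (r - k)"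
proof -
  have "\<sigma> ` I \<inter> T = {}" using assms sigT by blast
  then have "card (\<sigma> ` I \<union> T) = card (\<sigma> ` I) + card T" by (metis card_Un_disjoint finite)
  then show ?thesis using assms cardT by (simp add: card_image)
qed

lemma nu'_eq: "I \<subseteq> R \<Longrightarrow> inj_on \<sigma> I \<Longrightarrow> card I = k \<Longrightarrow> nu' I = ereal (\<Sum>i\<in>I. c i) + \<nu> (\<sigma> ` I \<union> T)"
  unfolding nu'_def by simp

lemma nu'_fin:
  assumes "nu' I \<noteq> \<infinity>"
  shows "I \<subseteq> R" "inj_on \<sigma> I" "card I = k" "\<nu> (\<sigma> ` I \<union> T) \<noteq> \<infinity>"
  using assms unfolding nu'_def by (auto split: if_splits)

lemma nu'_ninf: "nu' I \<noteq> -\<infinity>"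
  unfolding nu'_def using ninf by auto

lemma fin_real: "x \<noteq> \<infinity> \<Longrightarrow> x \<noteq> -\<infinity> \<Longrightarrow> \<exists>a. x = ereal a"
  by (cases x) auto

lemma swap_sets:
  assumes "i \<in> I" "j \<notin> I"
  shows "(I - {i}) \<union> {j} = insert j (I - {i})"
    and "(\<Sum>l\<in>insert j (I - {i}). c l) = (\<Sum>l\<in>I. c l) - c i + c j"
    and "card (insert j (I - {i})) = card I"
proof -
  show "(I - {i}) \<union> {j} = insert j (I - {i})" by auto
  show "(\<Sum>l\<in>insert j (I - {i}). c l) = (\<Sum>l\<in>I. c l) - c i + c j"
    using assms by (simp add: sum_diff1)
  have "card I > 0" using assms card_gt_0_iff by fastforce
  then show "card (insert j (I - {i})) = card I" using assms by (simp add: card_Diff_singleton)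
qed

lemma nu'_vm: "valuated_matroid k nu'"
  unfolding valuated_matroid_def
proof (intro conjI allI impI ballI)
  show "\<And>I. nu' I \<noteq> -\<infinity>" by (rule nu'_ninf)
next
  define g where "g s = (SOME i. i \<in> R \<and> \<sigma> i = s)" for s
  have g: "g s \<in> R \<and> \<sigma> (g s) = s" if "s \<in> S" for s
    unfolding g_def using that S_def by (metis (mono_tags, lifting) imageE someI)
  define I0 where "I0 = g ` (B0 \<inter> S)"
  have img: "\<sigma> ` I0 = B0 \<inter> S" unfolding I0_def using g by force
  have R0: "I0 \<subseteq> R" unfolding I0_def using g by auto
  have inj: "inj_on \<sigma> I0" unfolding I0_def inj_on_def using g by auto
  have cI0: "card I0 = k" using img inj B0(3) card_image by metis
  have "\<sigma> ` I0 \<union> T = B0" unfolding img T_def by auto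
  then have "nu' I0 \<noteq> \<infinity>" using nu'_eq[OF R0 inj cI0] B0(2) by simp
  then show "\<exists>I. card I = k \<and> nu' I \<noteq> \<infinity>" using cI0 by blast
next
  fix I J :: "'n set" and i :: 'n
  assume cI: "card I = k" and cJ: "card J = k" and i: "i \<in> I - J"
  have "\<not> J \<subseteq> I"
  proof
    assume "J \<subseteq> I"
    moreover have "finite I" by simp
    ultimately have "J = I" using cI cJ card_subset_eq[of I J] by simp
    then show False using i by simp
  qed
  then obtain j0 where j0: "j0 \<in> J - I" by blast
  show "\<exists>j\<in>J - I. nu' ((I - {i}) \<union> {j}) + nu' ((J - {j}) \<union> {i}) \<le> nu' I + nu' J"
  proof (cases "nu' I = \<infinity> \<or> nu' J = \<infinity>")
    case True
    then have "nu' I + nu' J = \<infinity>" by auto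
    then show ?thesis using j0 by auto
  next
    case False
    then have fI: "nu' I \<noteq> \<infinity>" and fJ: "nu' J \<noteq> \<infinity>" by auto
    note hI = nu'_fin[OF fI] and hJ = nu'_fin[OF fJ]
    obtain p where p: "\<nu> (\<sigma> ` I \<union> T) = ereal p" using fin_real[OF hI(4) ninf] by blast
    obtain q where q: "\<nu> (\<sigma> ` J \<union> T) = ereal q" using fin_real[OF hJ(4) ninf] by blast
    have iR: "i \<in> R" using i hI by auto
    show ?thesis
    proof (cases "\<sigma> i \<in> \<sigma> ` J")
      case True
      then obtain j where j: "j \<in> J" "\<sigma> j = \<sigma> i" by auto
      have jI: "j \<notin> I" using j i hI(2) by (metis DiffD1 DiffD2 inj_on_eq_iff)
      have jR: "j \<in> R" using j hJ by auto
      define I' where "I' = insert j (I - {i})"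
      define J' where "J' = insert i (J - {j})"
      have sI: "\<sigma> ` I' = \<sigma> ` I" unfolding I'_def using i j by auto
      have sJ: "\<sigma> ` J' = \<sigma> ` J" unfolding J'_def using i j by (auto, metis image_eqI)
      have iJ: "i \<notin> J" using i by simp
      have injI': "inj_on \<sigma> I'" unfolding I'_def using hI(2) i j jI
        by (auto simp: inj_on_def)
      have injJ': "inj_on \<sigma> J'" unfolding J'_def using hJ(2) i j
        by (auto simp: inj_on_def)
      have RI': "I' \<subseteq> R" unfolding I'_def using hI jR by auto
      have RJ': "J' \<subseteq> R" unfolding J'_def using hJ iR by auto
      have cI': "card I' = k" unfolding I'_def using swap_sets(3)[of i I j] i jI hI by simp
      have cJ': "card J' = k" unfolding J'_def using swap_sets(3)[of j J i] j iJ hJ by simp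
      have eI: "nu' ((I - {i}) \<union> {j}) = ereal ((\<Sum>l\<in>I. c l) - c i + c j) + ereal p" (is "_ = ?rhs")
      proof -
        have "(I - {i}) \<union> {j} = I'" unfolding I'_def by auto
        then have "nu' ((I - {i}) \<union> {j}) = nu' I'" by simp
        also have "\<dots> = ereal (\<Sum>l\<in>I'. c l) + \<nu> (\<sigma> ` I' \<union> T)" by (rule nu'_eq[OF RI' injI' cI'])
        also have "\<dots> = ?rhs" using sI p swap_sets(2)[of i I j, folded I'_def] i jI by simp
        finally show ?thesis .
      qed
      have eJ: "nu' ((J - {j}) \<union> {i}) = ereal ((\<Sum>l\<in>J. c l) - c j + c i) + ereal q" (is "_ = ?rhs")
      proof -
        have "(J - {j}) \<union> {i} = J'" unfolding J'_def by auto
        then have "nu' ((J - {j}) \<union> {i}) = nu' J'" by simp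
        also have "\<dots> = ereal (\<Sum>l\<in>J'. c l) + \<nu> (\<sigma> ` J' \<union> T)" by (rule nu'_eq[OF RJ' injJ' cJ'])
        also have "\<dots> = ?rhs" using sJ q swap_sets(2)[of j J i, folded J'_def] j iJ by simp
        finally show ?thesis .
      qed
      have "nu' ((I - {i}) \<union> {j}) + nu' ((J - {j}) \<union> {i}) = nu' I + nu' J"
        unfolding eI eJ nu'_eq[OF hI(1-3)] nu'_eq[OF hJ(1-3)] p q by simp
      then have "nu' ((I - {i}) \<union> {j}) + nu' ((J - {j}) \<union> {i}) \<le> nu' I + nu' J" by simp
      moreover have "j \<in> J - I" using j jI by simp
      ultimately show ?thesis by blast
    next
      case False
      define Is where "Is = \<sigma> ` I \<union> T"
      define Js where "Js = \<sigma> ` J \<union> T"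
      have cIs: "card Is = r" unfolding Is_def using card_img[OF hI(1,2)] hI(3) k_le by simp
      have cJs: "card Js = r" unfolding Js_def using card_img[OF hJ(1,2)] hJ(3) k_le by simp
      have "\<sigma> i \<in> Is - Js" unfolding Is_def Js_def using i False sigT[OF iR] by auto
      then obtain js where js: "js \<in> Js - Is"
        and ex: "\<nu> Is + \<nu> Js \<ge> \<nu> ((Is - {\<sigma> i}) \<union> {js}) + \<nu> ((Js - {js}) \<union> {\<sigma> i})"
        using vm cIs cJs unfolding valuated_matroid_def by blast
      obtain j where j: "j \<in> J" "\<sigma> j = js" using js unfolding Js_def Is_def by auto
      have jsI: "js \<notin> \<sigma> ` I" using js unfolding Is_def by auto
      have jI: "j \<notin> I" using jsI j by auto
      have jR: "j \<in> R" using j hJ by auto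
      have iJ: "i \<notin> J" using i by simp
      define I' where "I' = insert j (I - {i})"
      define J' where "J' = insert i (J - {j})"
      have injI': "inj_on \<sigma> I'" unfolding I'_def using hI(2) jsI j
        by (auto intro: inj_on_subset)
      have injJ': "inj_on \<sigma> J'" unfolding J'_def using hJ(2) False
        by (auto intro: inj_on_subset)
      have sI: "\<sigma> ` I' \<union> T = (Is - {\<sigma> i}) \<union> {js}" unfolding I'_def Is_def
        using hI(2) i j sigT[OF iR] by (auto simp: inj_on_def)
      have sJ: "\<sigma> ` J' \<union> T = (Js - {js}) \<union> {\<sigma> i}" unfolding J'_def Js_def
        using hJ(2) j sigT[OF jR] by (auto simp: inj_on_def)
      have RI': "I' \<subseteq> R" unfolding I'_def using hI jR by auto
      have RJ': "J' \<subseteq> R" unfolding J'_def using hJ iR by auto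
      have cI': "card I' = k" unfolding I'_def using swap_sets(3)[of i I j] i jI hI by simp
      have cJ': "card J' = k" unfolding J'_def using swap_sets(3)[of j J i] j iJ hJ by simp
      have eI: "nu' ((I - {i}) \<union> {j}) = ereal ((\<Sum>l\<in>I. c l) - c i + c j) + \<nu> ((Is - {\<sigma> i}) \<union> {js})" (is "_ = ?rhs")
      proof -
        have "(I - {i}) \<union> {j} = I'" unfolding I'_def by auto
        then have "nu' ((I - {i}) \<union> {j}) = nu' I'" by simp
        also have "\<dots> = ereal (\<Sum>l\<in>I'. c l) + \<nu> (\<sigma> ` I' \<union> T)" by (rule nu'_eq[OF RI' injI' cI'])
        also have "\<dots> = ?rhs" using sI swap_sets(2)[of i I j, folded I'_def] i jI by simp
        finally show ?thesis .
      qed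
      have eJ: "nu' ((J - {j}) \<union> {i}) = ereal ((\<Sum>l\<in>J. c l) - c j + c i) + \<nu> ((Js - {js}) \<union> {\<sigma> i})" (is "_ = ?rhs")
      proof -
        have "(J - {j}) \<union> {i} = J'" unfolding J'_def by auto
        then have "nu' ((J - {j}) \<union> {i}) = nu' J'" by simp
        also have "\<dots> = ereal (\<Sum>l\<in>J'. c l) + \<nu> (\<sigma> ` J' \<union> T)" by (rule nu'_eq[OF RJ' injJ' cJ'])
        also have "\<dots> = ?rhs" using sJ swap_sets(2)[of j J i, folded J'_def] j iJ by simp
        finally show ?thesis .
      qed
      have "nu' ((I - {i}) \<union> {j}) + nu' ((J - {j}) \<union> {i}) =
          ereal ((\<Sum>l\<in>I. c l) + (\<Sum>l\<in>J. c l)) + (\<nu> ((Is - {\<sigma> i}) \<union> {js}) + \<nu> ((Js - {js}) \<union> {\<sigma> i}))"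
        unfolding eI eJ by (simp add: ac_simps)
      also have "\<dots> \<le> ereal ((\<Sum>l\<in>I. c l) + (\<Sum>l\<in>J. c l)) + (\<nu> Is + \<nu> Js)"
        using ex by (rule add_left_mono)
      also have "\<dots> = nu' I + nu' J"
        unfolding nu'_eq[OF hI(1-3)] nu'_eq[OF hJ(1-3)] Is_def Js_def p q by simp
      finally have "nu' ((I - {i}) \<union> {j}) + nu' ((J - {j}) \<union> {i}) \<le> nu' I + nu' J" .
      moreover have "j \<in> J - I" using j jI by simp
      ultimately show ?thesis by blast
    qed
  qed
qed

lemma ereal_assoc3: "ereal (a + b) + V = ereal a + (ereal b + V)"
  by (cases V) auto

lemma ereal_cancel_le: "ereal p + Y \<le> Q + ereal z \<Longrightarrow> Y \<noteq> -\<infinity> \<Longrightarrow> Q \<noteq> -\<infinity> \<Longrightarrow> Y \<le> ereal (z - p) + Q"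
  by (cases Y; cases Q) auto

lemma ereal_split: "ereal a + V + (ereal b + X) = ereal (a + b) + (V + X)"
  by (cases V; cases X) auto

lemma tmv: "trop_mat_vec M x i = (if i \<in> R then ereal (c i) + x (\<sigma> i) else \<infinity>)"
proof (cases "i \<in> R")
  case True
  have "Min (range (\<lambda>j. M i j + x j)) = ereal (c i) + x (\<sigma> i)"
  proof (rule Min_eqI)
    show "ereal (c i) + x (\<sigma> i) \<in> range (\<lambda>j. M i j + x j)"
      using M_R[OF True, of "\<sigma> i"] by (metis (no_types, lifting) rangeI)
  qed (use M_R[OF True] in auto)
  then show ?thesis unfolding trop_mat_vec_def using True by simp
next
  case False
  have "Min (range (\<lambda>j. M i j + x j)) = \<infinity>"
    by (rule Min_eqI) (use M_nR[OF False] in auto)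
  then show ?thesis unfolding trop_mat_vec_def using False by simp
qed

lemma image_sub: "trop_mat_image M (trop_lin r \<nu>) \<subseteq> trop_lin k nu'"
proof
  fix y assume "y \<in> trop_mat_image M (trop_lin r \<nu>)"
  then obtain x where x: "x \<in> trop_lin r \<nu>" and yx: "y = trop_mat_vec M x" and yp: "y \<in> proj_points"
    unfolding trop_mat_image_def by auto
  have cx: "circ_ok r \<nu> x" using x trop_lin_iff by auto
  have yv: "y l = (if l \<in> R then ereal (c l) + x (\<sigma> l) else \<infinity>)" for l
    unfolding yx tmv ..
  have "circ_ok k nu' y"
    unfolding circ_ok_def
  proof (intro allI impI)
    fix I :: "'n set" and i :: 'n
    assume cI: "card I = k + 1" and ne: "circuit_vec nu' I i + y i \<noteq> \<infinity>"
    have iI: "i \<in> I" using ne unfolding circuit_vec_def by (cases "i \<in> I") auto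
    have nI: "nu' (I - {i}) \<noteq> \<infinity>" using ne iI unfolding circuit_vec_def by auto
    note hI = nu'_fin[OF nI]
    have iR: "i \<in> R" using ne yv[of i] by (cases "i \<in> R") auto
    have IR: "I \<subseteq> R" using hI(1) iR by auto
    define SI where "SI = (\<Sum>l\<in>I. c l)"
    have Ssplit: "SI = (\<Sum>l\<in>I - {l}. c l) + c l" if "l \<in> I" for l
      unfolding SI_def using that by (simp add: sum_diff1)
    have cIl: "card (I - {l}) = k" if "l \<in> I" for l using cI that by simp
    show "\<exists>j. j \<noteq> i \<and> circuit_vec nu' I j + y j \<le> circuit_vec nu' I i + y i"
    proof (cases "inj_on \<sigma> I")
      case True
      define Is where "Is = \<sigma> ` I \<union> T"
      have cIs: "card Is = r + 1" unfolding Is_def using card_img[OF IR True] cI k_le by simp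
      have key: "circuit_vec nu' I l + y l = ereal SI + (circuit_vec \<nu> Is (\<sigma> l) + x (\<sigma> l))"
        if lI: "l \<in> I" for l
      proof -
        have R': "I - {l} \<subseteq> R" and inj': "inj_on \<sigma> (I - {l})" using IR True inj_on_subset[of \<sigma> I "I - {l}"] by auto
        have im: "\<sigma> ` (I - {l}) \<union> T = Is - {\<sigma> l}"
          unfolding Is_def using True lI sigT IR by (auto simp: inj_on_def)
        have "circuit_vec nu' I l + y l = (ereal (\<Sum>l\<in>I - {l}. c l) + \<nu> (Is - {\<sigma> l})) + (ereal (c l) + x (\<sigma> l))"
          unfolding circuit_vec_def using lI nu'_eq[OF R' inj' cIl[OF lI]] im yv[of l] IR by auto
        also have "\<dots> = ereal SI + (\<nu> (Is - {\<sigma> l}) + x (\<sigma> l))"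
          unfolding ereal_split Ssplit[OF lI] ..
        also have "\<dots> = ereal SI + (circuit_vec \<nu> Is (\<sigma> l) + x (\<sigma> l))"
          unfolding circuit_vec_def Is_def using lI by simp
        finally show ?thesis .
      qed
      have Tinf: "circuit_vec \<nu> Is t = \<infinity>" if "t \<in> T" for t
      proof -
        have cc: "card (Is - {t}) = r" using cIs that unfolding Is_def by simp
        have "\<sigma> ` I \<subseteq> (Is - {t}) \<inter> S" unfolding Is_def using that IR sigT sigS by auto
        then have "card (\<sigma> ` I) \<le> card ((Is - {t}) \<inter> S)" by (simp add: card_mono)
        moreover have "card (\<sigma> ` I) = k + 1" using True cI by (simp add: card_image)
        ultimately have le: "k + 1 \<le> card ((Is - {t}) \<inter> S)" by simp
        have "\<nu> (Is - {t}) = \<infinity>"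
        proof (rule ccontr)
          assume "\<nu> (Is - {t}) \<noteq> \<infinity>"
          then have "card ((Is - {t}) \<inter> S) \<le> k" by (rule kmax[OF cc])
          then show False using le by simp
        qed
        then show ?thesis unfolding circuit_vec_def by simp
      qed
      have ne2: "circuit_vec \<nu> Is (\<sigma> i) + x (\<sigma> i) \<noteq> \<infinity>" using ne key[OF iI] by auto
      then obtain j' where j': "j' \<noteq> \<sigma> i" "circuit_vec \<nu> Is j' + x j' \<le> circuit_vec \<nu> Is (\<sigma> i) + x (\<sigma> i)"
        using cx cIs unfolding circ_ok_def by blast
      have ne3: "circuit_vec \<nu> Is j' + x j' \<noteq> \<infinity>" using j'(2) ne2 by (auto simp: top_unique)
      have "j' \<in> Is" using ne3 unfolding circuit_vec_def by (cases "j' \<in> Is") auto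
      moreover have "j' \<notin> T" using ne3 Tinf by auto
      ultimately obtain l where l: "l \<in> I" "j' = \<sigma> l" unfolding Is_def by auto
      have "l \<noteq> i" using l j' by auto
      moreover have "circuit_vec nu' I l + y l \<le> circuit_vec nu' I i + y i"
        unfolding key[OF l(1)] key[OF iI] using j' l by (simp add: add_left_mono)
      ultimately show ?thesis by blast
    next
      case False
      obtain l where l: "l \<in> I - {i}" "\<sigma> l = \<sigma> i"
      proof -
        have "I = insert i (I - {i})" using iI by auto
        then have "\<not> inj_on \<sigma> (insert i (I - {i}))" using False by simp
        then have "\<sigma> i \<in> \<sigma> ` (I - {i})" using hI(2) inj_on_insert[of \<sigma> i "I - {i}"] by blast
        then obtain l' where "l' \<in> I - {i}" "\<sigma> i = \<sigma> l'" by blast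
        then show ?thesis using that[of l'] by simp
      qed
      have R': "I - {l} \<subseteq> R" using IR by auto
      have inj': "inj_on \<sigma> (I - {l})"
      proof -
        have "I - {l} = insert i (I - {i} - {l})" using iI l by auto
        moreover have "inj_on \<sigma> (I - {i} - {l})" using hI(2) by (rule inj_on_subset) blast
        moreover have "\<sigma> i \<notin> \<sigma> ` (I - {i} - {l})"
        proof
          assume "\<sigma> i \<in> \<sigma> ` (I - {i} - {l})"
          then obtain m where m0: "m \<in> I - {i} - {l}" "\<sigma> i = \<sigma> m" by (rule imageE)
          then have m: "m \<in> I - {i} - {l}" "\<sigma> m = \<sigma> l" using l(2) by simp_all
          then have "m = l" using hI(2) l(1) unfolding inj_on_def by blast
          then show False using m by simp
        qed
        ultimately show ?thesis by simp
      qed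
      have e1: "I - {l} = insert i (I - {i} - {l})" using iI l by auto
      have e2: "I - {i} = insert l (I - {i} - {l})" using l by auto
      have im: "\<sigma> ` (I - {l}) = \<sigma> ` (I - {i})"
        by (subst e1, subst e2) (simp only: image_insert l(2))
      have lI: "l \<in> I" "l \<noteq> i" using l by auto
      have "circuit_vec nu' I l + y l = (ereal (\<Sum>l\<in>I - {l}. c l) + \<nu> (\<sigma> ` (I - {i}) \<union> T)) + (ereal (c l) + x (\<sigma> i))"
      proof -
        have "circuit_vec nu' I l = nu' (I - {l})" unfolding circuit_vec_def using lI by simp
        also have "\<dots> = ereal (\<Sum>l\<in>I - {l}. c l) + \<nu> (\<sigma> ` (I - {i}) \<union> T)"
          using nu'_eq[OF R' inj' cIl[OF lI(1)]] unfolding im .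
        finally have a: "circuit_vec nu' I l = ereal (\<Sum>l\<in>I - {l}. c l) + \<nu> (\<sigma> ` (I - {i}) \<union> T)" .
        have b: "y l = ereal (c l) + x (\<sigma> i)" using yv[of l] IR lI(1) l(2) by auto
        show ?thesis unfolding a b ..
      qed
      also have "\<dots> = ereal SI + (\<nu> (\<sigma> ` (I - {i}) \<union> T) + x (\<sigma> i))"
        unfolding ereal_split Ssplit[OF lI(1)] ..
      also have "\<dots> = (ereal (\<Sum>l\<in>I - {i}. c l) + \<nu> (\<sigma> ` (I - {i}) \<union> T)) + (ereal (c i) + x (\<sigma> i))"
        unfolding ereal_split Ssplit[OF iI] ..
      also have "\<dots> = circuit_vec nu' I i + y i"
      proof -
        have a: "circuit_vec nu' I i = nu' (I - {i})" unfolding circuit_vec_def using iI by simp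
        have b: "y i = ereal (c i) + x (\<sigma> i)" using yv[of i] iR by simp
        show ?thesis unfolding a b nu'_eq[OF hI(1-3)] ..
      qed
      finally have "circuit_vec nu' I l + y l = circuit_vec nu' I i + y i" .
      then show ?thesis using lI(2) by (intro exI[of _ l]) simp
    qed
  qed
  then show "y \<in> trop_lin k nu'" using yp trop_lin_iff by auto
qed

lemma sub_image: "trop_lin k nu' \<subseteq> trop_mat_image M (trop_lin r \<nu>)"
proof
  fix y assume y: "y \<in> trop_lin k nu'"
  have yp: "y \<in> proj_points" using y trop_lin_iff by auto
  have yninf: "y f \<noteq> -\<infinity>" for f using yp unfolding proj_points_def by auto
  define Z where "Z = {e. y e \<noteq> \<infinity>}"
  have Zne: "Z \<noteq> {}" using yp unfolding proj_points_def Z_def by auto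
  have finb: "\<exists>B. card B = k \<and> nu' B \<noteq> \<infinity>" using nu'_vm unfolding valuated_matroid_def by auto
  have "\<forall>e\<in>Z. \<exists>B. card B = k \<and> e \<in> B \<and> nu' B \<noteq> \<infinity> \<and>
           (\<forall>f. f \<notin> B \<longrightarrow> nu' B + y f \<le> nu' (insert f (B - {e})) + y e)"
    using spanning[OF finb nu'_ninf y] unfolding Z_def by blast
  then have "\<exists>Bf. \<forall>e\<in>Z. card (Bf e) = k \<and> e \<in> Bf e \<and> nu' (Bf e) \<noteq> \<infinity> \<and>
           (\<forall>f. f \<notin> Bf e \<longrightarrow> nu' (Bf e) + y f \<le> nu' (insert f (Bf e - {e})) + y e)"
    by (rule bchoice)
  then obtain Bf where Bf0: "\<forall>e\<in>Z. card (Bf e) = k \<and> e \<in> Bf e \<and> nu' (Bf e) \<noteq> \<infinity> \<and>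
           (\<forall>f. f \<notin> Bf e \<longrightarrow> nu' (Bf e) + y f \<le> nu' (insert f (Bf e - {e})) + y e)"
    by (rule exE)
  have Bf: "card (Bf e) = k \<and> e \<in> Bf e \<and> nu' (Bf e) \<noteq> \<infinity> \<and>
           (\<forall>f. f \<notin> Bf e \<longrightarrow> nu' (Bf e) + y f \<le> nu' (insert f (Bf e - {e})) + y e)" if "e \<in> Z" for e
    using Bf0 that by (rule bspec)
  have Bfc: "card (Bf e) = k" and BfB: "e \<in> Bf e" and nuf: "nu' (Bf e) \<noteq> \<infinity>"
    and Bfi: "\<And>f. f \<notin> Bf e \<Longrightarrow> nu' (Bf e) + y f \<le> nu' (insert f (Bf e - {e})) + y e"
    if "e \<in> Z" for e using Bf[OF that] by blast+
  define yr where "yr e = real_of_ereal (y e)" for e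
  have yZ: "y e = ereal (yr e)" if "e \<in> Z" for e
    using yninf[of e] that unfolding yr_def Z_def by (cases "y e") auto
  define pf where "pf e = real_of_ereal (nu' (Bf e))" for e
  have pfe: "nu' (Bf e) = ereal (pf e)" if "e \<in> Z" for e
    using nuf[OF that] nu'_ninf[of "Bf e"] unfolding pf_def by (cases "nu' (Bf e)") auto
  define K where "K e = \<sigma> ` (Bf e - {e}) \<union> T" for e
  define lam where "lam e = yr e - pf e + (\<Sum>l\<in>Bf e - {e}. c l)" for e
  define h where "h e j = ereal (lam e) + cocirc \<nu> (K e) j" for e j
  define x where "x j = Min ((\<lambda>e. h e j) ` Z)" for j
  have ZR: "Z \<subseteq> R"
  proof
    fix e assume eZ: "e \<in> Z"
    then have "e \<in> Bf e" using BfB by blast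
    then show "e \<in> R" using nu'_fin(1)[OF nuf[OF eZ]] by blast
  qed
  have kpos: "k \<ge> 1" if "e \<in> Z" for e
    using Bfc[OF that] BfB[OF that] card_gt_0_iff[of "Bf e"] by auto
  have cK: "card (K e) + 1 = r" if eZ: "e \<in> Z" for e
  proof -
    have h1: "Bf e \<subseteq> R" "inj_on \<sigma> (Bf e)" using nu'_fin[OF nuf[OF eZ]] by simp_all
    have "card (K e) = card (Bf e - {e}) + (r - k)" unfolding K_def
      by (rule card_img) (use h1 inj_on_subset[of \<sigma> "Bf e" "Bf e - {e}"] in auto)
    then show ?thesis using Bfc[OF eZ] BfB[OF eZ] kpos[OF eZ] k_le by simp
  qed
  have tm: "ereal (c i) + h e (\<sigma> i) =
      (if i \<in> Bf e - {e} then \<infinity> else ereal (yr e - pf e) + nu' (insert i (Bf e - {e})))"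
    if eZ: "e \<in> Z" and iR: "i \<in> R" for e i
  proof -
    define J where "J = Bf e - {e}"
    have h1: "Bf e \<subseteq> R" "inj_on \<sigma> (Bf e)" "card (Bf e) = k" "\<nu> (\<sigma> ` Bf e \<union> T) \<noteq> \<infinity>"
      using nu'_fin[OF nuf[OF eZ]] by simp_all
    have eB: "e \<in> Bf e" using BfB[OF eZ] .
    have JR: "J \<subseteq> R" using h1 unfolding J_def by auto
    have cJ: "card J = k - 1" unfolding J_def using h1 eB by simp
    show ?thesis
    proof (cases "\<sigma> i \<in> \<sigma> ` J")
      case True
      then have cc: "cocirc \<nu> (K e) (\<sigma> i) = \<infinity>" unfolding cocirc_def K_def J_def by auto
      have "i \<notin> J \<Longrightarrow> nu' (insert i J) = \<infinity>"
      proof -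
        assume iJ: "i \<notin> J"
        have "\<not> inj_on \<sigma> (insert i J)" using True iJ by simp
        then show ?thesis unfolding nu'_def by auto
      qed
      then show ?thesis unfolding h_def cc J_def[symmetric] by auto
    next
      case False
      then have iJ: "i \<notin> J" by auto
      have iK: "\<sigma> i \<notin> K e" unfolding K_def J_def[symmetric] using False sigT[OF iR] by auto
      have inj: "inj_on \<sigma> (insert i J)" using False h1(2) inj_on_subset[of \<sigma> "Bf e" J] unfolding J_def by auto
      have cIJ: "card (insert i J) = k" using iJ cJ kpos[OF eZ] by simp
      have nuq: "nu' (insert i J) = ereal (c i + (\<Sum>l\<in>J. c l)) + \<nu> (insert (\<sigma> i) (K e))"
        using nu'_eq[of "insert i J"] inj cIJ JR iR iJ unfolding K_def J_def[symmetric] by simp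
      have pfeq: "pf e = (\<Sum>l\<in>J. c l) + c e + real_of_ereal (\<nu> (\<sigma> ` Bf e \<union> T))"
      proof -
        have "nu' (Bf e) = ereal (\<Sum>l\<in>Bf e. c l) + \<nu> (\<sigma> ` Bf e \<union> T)" using nu'_eq h1 by simp
        moreover have "(\<Sum>l\<in>Bf e. c l) = (\<Sum>l\<in>J. c l) + c e" unfolding J_def using eB by (simp add: sum_diff1)
        ultimately show ?thesis unfolding pf_def using h1(4) ninf by (cases "\<nu> (\<sigma> ` Bf e \<union> T)") auto
      qed
      have "ereal (c i) + h e (\<sigma> i) = ereal (c i + lam e) + \<nu> (insert (\<sigma> i) (K e))"
        unfolding h_def cocirc_def using iK by (cases "\<nu> (insert (\<sigma> i) (K e))") auto
      also have "\<dots> = ereal (yr e - pf e) + nu' (insert i J)"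
      proof -
        have "c i + lam e = (yr e - pf e) + (c i + (\<Sum>l\<in>J. c l))" unfolding lam_def J_def by simp
        then show ?thesis unfolding nuq by (simp only: ereal_assoc3)
      qed
      finally have fin: "ereal (c i) + h e (\<sigma> i) = ereal (yr e - pf e) + nu' (insert i J)" .
      have nb: "i \<notin> Bf e - {e}" using iJ unfolding J_def .
      show ?thesis by (subst if_not_P[OF nb]) (rule fin[unfolded J_def])
    qed
  qed
  have lower: "y i \<le> ereal (c i) + h e (\<sigma> i)" if eZ: "e \<in> Z" and iR: "i \<in> R" for e i
  proof (cases "i \<in> Bf e - {e}")
    case True then show ?thesis using tm[OF eZ iR] by simp
  next
    case False
    have t: "ereal (c i) + h e (\<sigma> i) = ereal (yr e - pf e) + nu' (insert i (Bf e - {e}))"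
      by (simp only: tm[OF eZ iR] if_not_P[OF False])
    show ?thesis
    proof (cases "i = e")
      case True
      have "insert i (Bf e - {e}) = Bf e" using True BfB[OF eZ] by auto
      then show ?thesis unfolding t using pfe[OF eZ] yZ[OF eZ] True by simp
    next
      case ie: False
      then have "i \<notin> Bf e" using False by auto
      then have ineq: "nu' (Bf e) + y i \<le> nu' (insert i (Bf e - {e})) + y e" using Bfi[OF eZ] by blast
      show ?thesis unfolding t
        by (rule ereal_cancel_le) (use ineq pfe[OF eZ] yZ[OF eZ] yninf[of i] nu'_ninf in auto)
    qed
  qed
  have upper: "ereal (c i) + h i (\<sigma> i) = y i" if iZ: "i \<in> Z" for i
  proof -
    have iR: "i \<in> R" using iZ ZR by auto
    have "insert i (Bf i - {i}) = Bf i" using BfB[OF iZ] by auto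
    then show ?thesis using tm[OF iZ iR] pfe[OF iZ] yZ[OF iZ] by simp
  qed
  have xmin: "\<exists>e\<in>Z. x j = h e j" for j
  proof -
    have "x j \<in> (\<lambda>e. h e j) ` Z" unfolding x_def by (rule Min_in) (use Zne in auto)
    then show ?thesis by auto
  qed
  have xle: "x j \<le> h e j" if "e \<in> Z" for e j unfolding x_def using that by simp
  have Mx: "trop_mat_vec M x = y"
  proof
    fix i
    show "trop_mat_vec M x i = y i"
    proof (cases "i \<in> R")
      case iR: True
      obtain e where e: "e \<in> Z" "x (\<sigma> i) = h e (\<sigma> i)" using xmin by blast
      have ge: "y i \<le> ereal (c i) + x (\<sigma> i)" using lower[OF e(1) iR] e(2) by simp
      show ?thesis
      proof (cases "i \<in> Z")
        case True
        have "ereal (c i) + x (\<sigma> i) \<le> ereal (c i) + h i (\<sigma> i)" using xle[OF True] by (rule add_left_mono)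
        then show ?thesis using ge upper[OF True] tmv iR by simp
      next
        case False
        then have "y i = \<infinity>" unfolding Z_def by simp
        then show ?thesis using ge tmv iR by (simp add: top_unique)
      qed
    next
      case False
      then have "i \<notin> Z" using ZR by auto
      then show ?thesis using tmv False unfolding Z_def by simp
    qed
  qed
  have xp: "x \<in> proj_points"
  proof -
    have "x j \<noteq> -\<infinity>" for j
    proof -
      obtain e where "e \<in> Z" "x j = h e j" using xmin by blast
      then show ?thesis unfolding h_def cocirc_def using ninf by auto
    qed
    moreover obtain e where eZ: "e \<in> Z" using Zne by blast
    have eR: "e \<in> R" using eZ ZR by auto
    have "y e \<noteq> \<infinity>" using eZ unfolding Z_def by simp
    then have "ereal (c e) + x (\<sigma> e) \<noteq> \<infinity>" using tmv[of x e] eR Mx by simp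
    then have "x (\<sigma> e) \<noteq> \<infinity>" by auto
    ultimately show ?thesis unfolding proj_points_def by auto
  qed
  have hok: "circ_ok r \<nu> (h e)" if eZ: "e \<in> Z" for e
  proof -
    have "circ_ok r \<nu> (\<lambda>j. ereal (lam e) + cocirc \<nu> (K e) j)"
      by (rule circ_ok_shift[OF plucker[OF vm cK[OF eZ]]])
    then show ?thesis unfolding h_def .
  qed
  have "circ_ok r \<nu> (\<lambda>j. Min ((\<lambda>e. h e j) ` Z))"
    by (rule circ_ok_Min[OF finite Zne hok])
  then have "circ_ok r \<nu> x" unfolding x_def .
  then have "x \<in> trop_lin r \<nu>" using xp trop_lin_iff by auto
  then show "y \<in> trop_mat_image M (trop_lin r \<nu>)" unfolding trop_mat_image_def using Mx yp by force
qed

end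

theorem corollary2p25:
  fixes val :: "'k::field \<Rightarrow> ereal"
    and \<mu> :: "'n::finite set \<Rightarrow> ereal"
    and A :: "'n \<Rightarrow> 'n \<Rightarrow> 'k"
  assumes "nonarch_valuation val"
    and "valuated_matroid r \<mu>"
    and "weakly_monomial A"
  shows "tropical_linear_space (trop_mat_image (\<lambda>i j. val (A i j)) (trop_lin r \<mu>))"
proof -
  have nv1: "\<forall>x. val x \<noteq> -\<infinity>" and nv2: "\<forall>x. val x = \<infinity> \<longleftrightarrow> x = 0"
    using assms(1) unfolding nonarch_valuation_def by blast+
  have v0: "val 0 = \<infinity>" using nv2 by blast
  have vfin: "val a \<noteq> \<infinity>" if "a \<noteq> 0" for a using nv2 that by blast
  have vninf: "val a \<noteq> -\<infinity>" for a using nv1 by blast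
  define R where "R = {i. \<exists>j. A i j \<noteq> 0}"
  define \<sigma> where "\<sigma> i = (SOME j. A i j \<noteq> 0)" for i
  have As: "A i (\<sigma> i) \<noteq> 0" if "i \<in> R" for i
  proof -
    from that obtain j where "A i j \<noteq> 0" unfolding R_def by auto
    then show ?thesis unfolding \<sigma>_def by (rule someI)
  qed
  have Au: "j = \<sigma> i" if "i \<in> R" "A i j \<noteq> 0" for i j
  proof -
    have "\<forall>i. card {j. A i j \<noteq> 0} \<le> 1" using assms(3) unfolding weakly_monomial_def .
    then have "card {j. A i j \<noteq> 0} \<le> 1" by (rule spec)
    then have "card {j. A i j \<noteq> 0} \<le> Suc 0" by (simp only: One_nat_def)
    then have H: "\<forall>a\<in>{j. A i j \<noteq> 0}. \<forall>b\<in>{j. A i j \<noteq> 0}. a = b"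
      by (rule card_le_Suc0_iff_eq[OF finite, THEN iffD1])
    have m1: "j \<in> {j. A i j \<noteq> 0}" and m2: "\<sigma> i \<in> {j. A i j \<noteq> 0}" using that As[OF that(1)] by simp_all
    have "\<forall>b\<in>{j. A i j \<noteq> 0}. j = b" using H m1 by (rule bspec)
    then show ?thesis using m2 by (rule bspec)
  qed
  define c where "c i = real_of_ereal (val (A i (\<sigma> i)))" for i
  define M where "M = (\<lambda>i j. val (A i j))"
  have M_R: "M i j = (if j = \<sigma> i then ereal (c i) else \<infinity>)" if "i \<in> R" for i j
  proof (cases "j = \<sigma> i")
    case True
    have "val (A i (\<sigma> i)) \<noteq> \<infinity>" using vfin As[OF that] by blast
    then show ?thesis using True vninf[of "A i (\<sigma> i)"] unfolding M_def c_def
      by (cases "val (A i (\<sigma> i))") auto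
  next
    case False
    then have "A i j = 0" using Au[OF that] by blast
    then show ?thesis using False v0 unfolding M_def by simp
  qed
  have M_nR: "M i j = \<infinity>" if "i \<notin> R" for i j
    using that v0 unfolding M_def R_def by auto
  define S where "S = \<sigma> ` R"
  define Bs where "Bs = {B. card B = r \<and> \<mu> B \<noteq> \<infinity>}"
  have Bsne: "Bs \<noteq> {}" using assms(2) unfolding valuated_matroid_def Bs_def by auto
  define k where "k = Max ((\<lambda>B. card (B \<inter> S)) ` Bs)"
  have "k \<in> (\<lambda>B. card (B \<inter> S)) ` Bs" unfolding k_def using Bsne by (intro Max_in) auto
  then obtain B0 where B0: "B0 \<in> Bs" "card (B0 \<inter> S) = k" by auto
  have kmax: "card (B \<inter> S) \<le> k" if "card B = r" "\<mu> B \<noteq> \<infinity>" for B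
    unfolding k_def using that Bs_def by (intro Max_ge) auto
  define T where "T = B0 - S"
  interpret w: wms \<mu> r k R S T B0 \<sigma> c M
    by unfold_locales (use assms(2) M_R M_nR S_def B0 T_def kmax Bs_def in auto)
  have "trop_mat_image M (trop_lin r \<mu>) = trop_lin k w.nu'"
    using w.image_sub w.sub_image by blast
  then show ?thesis unfolding tropical_linear_space_def M_def using w.nu'_vm by metis
qed

end
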